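(* Assume $\operatorname{add}(\mathcal N)=\operatorname{cov}(\mathcal N)$. Then $\mathcal{AN}_{\operatorname{add}(\mathcal N)}$ is strongly $2^{\mathfrak c}$-algebrable in $\left(\mathbb R^{\mathbb R}\right)^{\operatorname{add}(\mathcal N)}$.
   Context: For a regular infinite cardinal $\kappa$, a $\kappa$-sequence $(x_\alpha)_{\alpha<\kappa}$ converges to $x$ if for every neighbourhood $U$ of $x$ there is $\alpha_0<\kappa$ with $x_\alpha\in U$ for all $\alpha_0<\alpha<\kappa$; $\left(\mathbb R^{\mathbb R}\right)^{\kappa}$ is the commutative real algebra of $\kappa$-sequences of functions $\mathbb R\to\mathbb R$ with indexwise operations. $\operatorname{add}(\mathcal N)$ is the least cardinality of a family of Lebesgue null sets with non-null union; $\operatorname{cov}(\mathcal N)$ the least cardinality of a family of null sets covering $[0,1]$. $\mathcal{AN}_{\kappa}$: $\kappa$-sequences of Lebesgue measurable functions $f_\alpha:\mathbb R\to\mathbb R$ converging pointwise a.e. to a function that is not Lebesgue measurable. $S$ is strongly $\mu$-algebrable if there is a set $X$ of $\mu$ algebraically independent elements such that every nonzero element of the (non-unital) algebra generated by $X$ belongs to $S$. *)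

theory Defs
  imports "HOL-Analysis.Analysis" "HOL-Library.Poly_Mapping"
begin

(* Cardinals are represented by cardinal orders (initial ordinals), as in HOL's
   BNF cardinal library: r is a cardinal order on the whole type 'k. *)

definition is_addN :: "'k rel \<Rightarrow> bool" where
  "is_addN r \<longleftrightarrow> card_order r
     \<and> (\<exists>F::real set set. F \<subseteq> null_sets lebesgue \<and> \<Union>F \<notin> null_sets lebesgue
            \<and> (card_of F, r) \<in> ordIso)
     \<and> (\<forall>F::real set set. F \<subseteq> null_sets lebesgue \<and> \<Union>F \<notin> null_sets lebesgue
            \<longrightarrow> (r, card_of F) \<in> ordLeq)"

definition is_covN :: "'k rel \<Rightarrow> bool" where
  "is_covN r \<longleftrightarrow> card_order r
     \<and> (\<exists>F::real set set. F \<subseteq> null_sets lebesgue \<and> {0..1} \<subseteq> \<Union>F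
            \<and> (card_of F, r) \<in> ordIso)
     \<and> (\<forall>F::real set set. F \<subseteq> null_sets lebesgue \<and> {0..1} \<subseteq> \<Union>F
            \<longrightarrow> (r, card_of F) \<in> ordLeq)"

definition kseq_converges :: "'k rel \<Rightarrow> ('k \<Rightarrow> 'a::topological_space) \<Rightarrow> 'a \<Rightarrow> bool" where
  "kseq_converges r x l \<longleftrightarrow>
     (\<forall>U. open U \<and> l \<in> U \<longrightarrow>
        (\<exists>\<alpha>0. \<forall>\<alpha>. (\<alpha>0, \<alpha>) \<in> r \<and> \<alpha> \<noteq> \<alpha>0 \<longrightarrow> x \<alpha> \<in> U))"

definition AN :: "'k rel \<Rightarrow> ('k \<Rightarrow> real \<Rightarrow> real) set" where
  "AN r = {f. (\<forall>\<alpha>. f \<alpha> \<in> borel_measurable lebesgue)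
     \<and> (\<exists>g. g \<notin> borel_measurable lebesgue
            \<and> (AE t in lebesgue. kseq_converges r (\<lambda>\<alpha>. f \<alpha> t) (g t)))}"

inductive_set gen_alg :: "('k \<Rightarrow> real \<Rightarrow> real) set \<Rightarrow> ('k \<Rightarrow> real \<Rightarrow> real) set"
  for X where
    gen: "x \<in> X \<Longrightarrow> x \<in> gen_alg X"
  | add: "f \<in> gen_alg X \<Longrightarrow> g \<in> gen_alg X \<Longrightarrow> (\<lambda>\<alpha> t. f \<alpha> t + g \<alpha> t) \<in> gen_alg X"
  | mult: "f \<in> gen_alg X \<Longrightarrow> g \<in> gen_alg X \<Longrightarrow> (\<lambda>\<alpha> t. f \<alpha> t * g \<alpha> t) \<in> gen_alg X"
  | scale: "f \<in> gen_alg X \<Longrightarrow> (\<lambda>\<alpha> t. c * f \<alpha> t) \<in> gen_alg X"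

text \<open>Multivariate real polynomials whose variables are elements of the algebra, as finitely
  supported maps from monomials (finitely supported exponent maps) to coefficients,
  and their evaluation in the algebra (R^R)^kappa.\<close>
type_synonym 'v mpoly_rep = "('v \<Rightarrow>\<^sub>0 nat) \<Rightarrow>\<^sub>0 real"

definition poly_vars :: "'v mpoly_rep \<Rightarrow> 'v set" where
  "poly_vars P = \<Union> (Poly_Mapping.keys ` (Poly_Mapping.keys P))"

definition poly_eval :: "('k \<Rightarrow> real \<Rightarrow> real) mpoly_rep \<Rightarrow> ('k \<Rightarrow> real \<Rightarrow> real)" where
  "poly_eval P = (\<lambda>\<alpha> t. \<Sum>m\<in>Poly_Mapping.keys P. Poly_Mapping.lookup P m * (\<Prod>v\<in>Poly_Mapping.keys m. v \<alpha> t ^ Poly_Mapping.lookup m v))"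

definition alg_independent :: "('k \<Rightarrow> real \<Rightarrow> real) set \<Rightarrow> bool" where
  "alg_independent X \<longleftrightarrow>
     (\<forall>P. P \<noteq> 0 \<and> poly_vars P \<subseteq> X \<and> Poly_Mapping.lookup P 0 = 0 \<longrightarrow> poly_eval P \<noteq> (\<lambda>\<alpha> t. 0))"

definition strongly_algebrable :: "('k \<Rightarrow> real \<Rightarrow> real) set \<Rightarrow> 'c rel \<Rightarrow> bool" where
  "strongly_algebrable S mu \<longleftrightarrow>
     (\<exists>X. (card_of X, mu) \<in> ordIso \<and> alg_independent X
          \<and> (\<forall>f\<in>gen_alg X. f \<noteq> (\<lambda>\<alpha> t. 0) \<longrightarrow> f \<in> S))"

end

theory Submission
  imports Defs "HOL-Library.Equipollence" "HOL-Library.Countable_Set" "HOL-Computational_Algebra.Primes"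
begin

context includes cardinal_syntax begin

lemma lepoll_iff_ordLeq: "A \<lesssim> B \<longleftrightarrow> |A| \<le>o |B|"
  unfolding lepoll_def card_of_ordLeq[symmetric] by auto

lemma card_lists_real: "|UNIV :: real list set| \<le>o |UNIV :: real set|"
proof -
  have inf: "\<not> finite (UNIV::real set)" by (simp add: infinite_UNIV_char_0)
  define L where "L n = {xs::real list. length xs = n}" for n
  have Ln: "|L n| \<le>o |UNIV::real set|" for n
  proof (induction n)
    case 0
    have "L 0 = {[]}" by (auto simp: L_def)
    then show ?case using card_of_singl_ordLeq[of "UNIV::real set" "[]"] by simp
  next
    case (Suc n)
    have "L (Suc n) = (\<lambda>(x,xs). x#xs) ` (UNIV \<times> L n)"
      by (auto simp: L_def image_iff length_Suc_conv)
    moreover have "|(\<lambda>(x,xs). x#xs) ` ((UNIV::real set) \<times> L n)| \<le>o |(UNIV::real set) \<times> L n|" by (rule card_of_image)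
    moreover have "|(UNIV::real set) \<times> L n| \<le>o |(UNIV::real set) \<times> (UNIV::real set)|"
      by (rule card_of_Times_mono2[OF Suc])
    moreover have "|(UNIV::real set) \<times> (UNIV::real set)| =o |UNIV::real set|"
      by (rule card_of_Times_same_infinite[OF inf])
    ultimately show ?case
      by (metis ordLeq_transitive ordIso_imp_ordLeq)
  qed
  have "(UNIV::real list set) = (\<Union>n\<in>(UNIV::nat set). L n)" by (auto simp: L_def)
  moreover have "|\<Union>n\<in>(UNIV::nat set). L n| \<le>o |UNIV::real set|"
    apply (rule card_of_UNION_ordLeq_infinite[OF inf])
    using inf infinite_iff_card_of_nat apply blast
    using Ln by blast
  ultimately show ?thesis by simp
qed

type_synonym Z = "real list \<times> real list"

lemma card_Z: "|UNIV :: Z set| \<le>o |UNIV :: real set|"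
proof -
  have inf: "\<not> finite (UNIV::real set)" by (simp add: infinite_UNIV_char_0)
  have "|(UNIV::real list set) \<times> (UNIV::real list set)| \<le>o |(UNIV::real set) \<times> (UNIV::real list set)|"
    by (rule card_of_Times_mono1[OF card_lists_real])
  moreover have "|(UNIV::real set) \<times> (UNIV::real list set)| \<le>o |(UNIV::real set) \<times> (UNIV::real set)|"
    by (rule card_of_Times_mono2[OF card_lists_real])
  moreover have "|(UNIV::real set) \<times> (UNIV::real set)| =o |UNIV::real set|"
    by (rule card_of_Times_same_infinite[OF inf])
  ultimately show ?thesis
    by (metis UNIV_Times_UNIV ordLeq_transitive ordIso_imp_ordLeq)
qed

end

context includes cardinal_syntax begin

lemma inj_choice:
  fixes C :: "'i \<Rightarrow> 'a set" and B :: "'b set"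
  assumes IB: "|I| \<le>o |B|" and CB: "\<forall>i\<in>I. |B| \<le>o |C i|"
  shows "\<exists>p. inj_on p I \<and> (\<forall>i\<in>I. p i \<in> C i)"
proof -
  let ?r = "|I|"
  have Co: "Card_order ?r" by (rule card_of_Card_order)
  have Fi: "Field ?r = I" by (rule Field_card_of)
  have wo: "wo_rel ?r" using card_of_Well_order unfolding wo_rel_def by blast
  define F where "F f a = (SOME x. x \<in> C a \<and> x \<notin> f ` underS ?r a)" for f :: "'i \<Rightarrow> 'a" and a
  define p where "p = wfrec (?r - Id) F"
  have key: "p a \<in> C a \<and> p a \<notin> p ` underS ?r a" if a: "a \<in> I" for a
  proof -
    have peq: "p a = F (cut p (?r - Id) a) a"
      unfolding p_def by (rule wfrec[OF wo_rel.WF[OF wo]])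
    have cuteq: "(cut p (?r - Id) a) ` underS ?r a = p ` underS ?r a"
      by (auto simp: cut_def underS_def image_iff)
    have "|p ` underS ?r a| \<le>o |underS ?r a|" by (rule card_of_image)
    moreover have "|underS ?r a| <o ?r" using card_of_underS[OF Co] a Fi by auto
    ultimately have lt: "|p ` underS ?r a| <o |C a|"
      using IB CB a by (meson ordLeq_ordLess_trans ordLess_ordLeq_trans)
    have "\<exists>x. x \<in> C a \<and> x \<notin> p ` underS ?r a"
    proof (rule ccontr)
      assume "\<not> ?thesis"
      then have "C a \<subseteq> p ` underS ?r a" by blast
      then have "|C a| \<le>o |p ` underS ?r a|" by (rule card_of_mono1)
      with lt show False using not_ordLess_ordLeq by blast
    qed
    then have "F (cut p (?r - Id) a) a \<in> C a \<and> F (cut p (?r - Id) a) a \<notin> p ` underS ?r a"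
      unfolding F_def cuteq by (rule someI_ex)
    then show ?thesis using peq by simp
  qed
  have "inj_on p I"
  proof (rule inj_onI)
    fix a b assume ab: "a \<in> I" "b \<in> I" "p a = p b"
    show "a = b"
    proof (rule ccontr)
      assume ne: "a \<noteq> b"
      have "(a,b) \<in> ?r \<or> (b,a) \<in> ?r"
        using wo_rel.TOTALS[OF wo] ab Fi by blast
      then show False
      proof
        assume "(a,b) \<in> ?r"
        then have "a \<in> underS ?r b" using ne by (auto simp: underS_def)
        then show False using key[OF ab(2)] ab(3) by (metis image_eqI)
      next
        assume "(b,a) \<in> ?r"
        then have "b \<in> underS ?r a" using ne by (auto simp: underS_def)
        then show False using key[OF ab(1)] ab(3) by (metis image_eqI)
      qed
    qed
  qed
  then show ?thesis using key by blast
qed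

lemma card_closed: "|{K::real set. closed K}| \<le>o |UNIV::real set|"
proof -
  define enc where "enc K = {n::nat. \<exists>a b::rat. n = to_nat (a,b) \<and> {real_of_rat a<..<real_of_rat b} \<inter> K = {}}" for K :: "real set"
  have sub: "K \<subseteq> K'" if K: "closed K" "closed K'" and e: "enc K = enc K'" for K K'
  proof
    fix x assume xK: "x \<in> K"
    show "x \<in> K'"
    proof (rule ccontr)
      assume "x \<notin> K'"
      then have "x \<in> - K'" by simp
      moreover have "open (- K')" using K by auto
      ultimately obtain d where d: "d > 0" "ball x d \<subseteq> - K'"
        using open_contains_ball by blast
      obtain ra where ra: "ra \<in> \<rat>" "x - d < ra" "ra < x"
        using Rats_dense_in_real[of "x - d" x] d by auto
      obtain rb where rb: "rb \<in> \<rat>" "x < rb" "rb < x + d"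
        using Rats_dense_in_real[of x "x + d"] d by auto
      obtain qa where qa: "ra = real_of_rat qa" using ra(1) Rats_cases by blast
      obtain qb where qb: "rb = real_of_rat qb" using rb(1) Rats_cases by blast
      have "{real_of_rat qa<..<real_of_rat qb} \<subseteq> ball x d"
        using ra rb qa qb by (auto simp: dist_real_def)
      then have "{real_of_rat qa<..<real_of_rat qb} \<inter> K' = {}" using d by auto
      then have "to_nat (qa,qb) \<in> enc K'" unfolding enc_def by blast
      then have "to_nat (qa,qb) \<in> enc K" using e by simp
      then obtain a b where "to_nat (qa,qb) = to_nat (a,b)" "{real_of_rat a<..<real_of_rat b} \<inter> K = {}"
        unfolding enc_def by blast
      then have "{real_of_rat qa<..<real_of_rat qb} \<inter> K = {}" by simp
      moreover have "x \<in> {real_of_rat qa<..<real_of_rat qb}" using ra rb qa qb by auto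
      ultimately show False using xK by blast
    qed
  qed
  have "inj_on enc {K::real set. closed K}"
    by (rule inj_onI) (metis mem_Collect_eq subset_antisym sub)
  then have "|{K::real set. closed K}| \<le>o |UNIV::nat set set|"
    using card_of_ordLeq by blast
  moreover have "|UNIV::nat set set| \<le>o |UNIV::real set|"
    using nat_sets_eqpoll_reals eqpoll_imp_lepoll lepoll_iff_ordLeq by blast
  ultimately show ?thesis using ordLeq_transitive by blast
qed

end

context includes cardinal_syntax begin

lemma bnd01: "bounded {0..1::real}" by (rule compact_imp_bounded) simp

lemma card_pos_closed:
  fixes K :: "real set"
  assumes cl: "closed K" and sub: "K \<subseteq> {0..1}" and pos: "0 < measure lebesgue K"
  shows "|UNIV::real set| \<le>o |K|"
proof -
  have cK: "compact K" using cl sub compact_eq_bounded_closed bounded_subset[OF bnd01 sub] by blast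
  define F where "F x = measure lebesgue (K \<inter> {..x})" for x
  have Kx: "K \<inter> {..x} \<in> lmeasurable" for x
    by (rule lmeasurable_compact, rule compact_Int_closed[OF cK closed_atMost])
  have Icc: "{x..y} \<in> lmeasurable" for x y :: real by (rule lmeasurable_compact) simp
  have mono: "F x \<le> F y" if "x \<le> y" for x y
    unfolding F_def using that Kx[of x] Kx[of y]
    by (intro measure_mono_fmeasurable) (auto simp del: fmeasurable_def)
  have diff: "F y - F x \<le> y - x" if xy: "x \<le> y" for x y
  proof -
    have "F y = F x + measure lebesgue ((K \<inter> {..y}) - (K \<inter> {..x}))"
      unfolding F_def using measure_Un2[OF Kx[of x] Kx[of y]] xy
      by (metis Int_absorb1 Int_mono order_refl Un_absorb1 atMost_subset_iff)
    moreover have "measure lebesgue ((K \<inter> {..y}) - (K \<inter> {..x})) \<le> measure lebesgue {x..y}"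
      using Kx Icc by (intro measure_mono_fmeasurable) (auto simp: fmeasurable_def)
    moreover have "measure lebesgue {x..y} = y - x" using xy by simp
    ultimately show ?thesis by simp
  qed
  have lip: "1-lipschitz_on UNIV F"
    unfolding lipschitz_on_def
  proof (intro conjI ballI)
    fix x y :: real
    show "dist (F x) (F y) \<le> 1 * dist x y"
    proof (cases "x \<le> y")
      case True then show ?thesis using diff[of x y] mono[of x y] by (simp add: dist_real_def)
    next
      case False then show ?thesis using diff[of y x] mono[of y x] by (simp add: dist_real_def)
    qed
  qed simp
  have cont: "continuous_on UNIV F" by (rule lipschitz_on_continuous_on[OF lip])
  have Fm1: "F (-1) = 0"
  proof -
    have "K \<inter> {..-1} = {}" using sub by auto
    then show ?thesis unfolding F_def by simp
  qed
  have F2: "F 2 = measure lebesgue K"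
  proof -
    have "K \<inter> {..2} = K" using sub by auto
    then show ?thesis unfolding F_def by simp
  qed
  have surj: "{0<..<measure lebesgue K} \<subseteq> F ` K"
  proof
    fix y assume y: "y \<in> {0<..<measure lebesgue K}"
    obtain x where x: "-1 \<le> x" "x \<le> 2" "F x = y"
      using IVT'[of F "-1" y 2] Fm1 F2 y continuous_on_subset[OF cont] by force
    let ?S = "K \<inter> {..x}"
    have ne: "?S \<noteq> {}" using x y unfolding F_def by auto
    have clS: "closed ?S" using cl by (simp add: closed_Int)
    have bdd: "bdd_above ?S" by (rule bdd_aboveI[of _ x]) auto
    define k where "k = Sup ?S"
    have kS: "k \<in> ?S" unfolding k_def by (rule closed_contains_Sup[OF ne bdd clS])
    have "K \<inter> {..k} = ?S"
    proof
      show "K \<inter> {..k} \<subseteq> ?S" using kS by auto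
      show "?S \<subseteq> K \<inter> {..k}" unfolding k_def using bdd by (auto intro: cSup_upper)
    qed
    then have "F k = y" using x unfolding F_def by simp
    then show "y \<in> F ` K" using kS by blast
  qed
  have "|UNIV::real set| =o |{0<..<measure lebesgue K}|"
    using open_interval_eqpoll_reals[of 0 "measure lebesgue K"] pos eqpoll_iff_card_of_ordIso eqpoll_sym
    by blast
  moreover have "|{0<..<measure lebesgue K}| \<le>o |K|" by (rule surj_imp_ordLeq[OF surj])
  ultimately show ?thesis using ordIso_ordLeq_trans by blast
qed

lemma inner_pos:
  fixes E :: "real set"
  assumes E: "E \<in> sets lebesgue" "E \<subseteq> {0..1}" "0 < measure lebesgue E"
  shows "\<exists>T. closed T \<and> T \<subseteq> E \<and> 0 < measure lebesgue T"
proof -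
  obtain T where T: "closed T" "T \<subseteq> E" "E - T \<in> lmeasurable" "emeasure lebesgue (E - T) < ennreal (measure lebesgue E)"
    using sets_lebesgue_inner_closed[OF E(1) E(3)] by blast
  have Eb: "E \<in> lmeasurable" using E bounded_subset[OF bnd01] bounded_set_imp_lmeasurable by blast
  have Tl: "T \<in> lmeasurable"
    using T(1,2) E(2) by (intro lmeasurable_compact) (meson bnd01 bounded_subset compact_eq_bounded_closed order_trans)
  have "emeasure lebesgue (E - T) = ennreal (measure lebesgue (E - T))" using T(3) emeasure_eq_measure2 by blast
  then have "measure lebesgue (E - T) < measure lebesgue E" using T(4) by (simp add: ennreal_less_iff)
  moreover have "measure lebesgue (E - T) = measure lebesgue E - measure lebesgue T"
    using measurable_measure_Diff[OF Eb _ T(2)] Tl by (simp add: fmeasurable_def)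
  ultimately show ?thesis using T by auto
qed

lemma nonmeas:
  fixes D :: "real set"
  assumes D: "D \<subseteq> {0..1}"
    and hit: "\<And>K. closed K \<Longrightarrow> K \<subseteq> {0..1} \<Longrightarrow> 0 < measure lebesgue K \<Longrightarrow> K \<inter> D \<noteq> {} \<and> K - D \<noteq> {}"
  shows "D \<notin> sets lebesgue"
proof
  assume Dm: "D \<in> sets lebesgue"
  have I01: "{0..1::real} \<in> lmeasurable" by (rule lmeasurable_compact) simp
  have "measure lebesgue ({0..1} - D) = measure lebesgue {0..1::real} - measure lebesgue D"
    by (rule measurable_measure_Diff[OF I01 Dm D])
  then have eq: "measure lebesgue ({0..1} - D) = 1 - measure lebesgue D" by simp
  show False
  proof (cases "0 < measure lebesgue D")
    case True
    then obtain T where "closed T" "T \<subseteq> D" "0 < measure lebesgue T" using inner_pos[OF Dm D] by blast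
    then show False using hit[of T] D by blast
  next
    case False
    then have "0 < measure lebesgue ({0..1} - D)" using eq measure_nonneg[of lebesgue D] by linarith
    moreover have "{0..1} - D \<in> sets lebesgue" using Dm I01 by (auto simp: fmeasurable_def)
    ultimately obtain T where "closed T" "T \<subseteq> {0..1} - D" "0 < measure lebesgue T"
      using inner_pos[of "{0..1} - D"] by blast
    then show False using hit[of T] by blast
  qed
qed

end

lemma dominant_limit:
  fixes J :: "'m set" and c :: "'m \<Rightarrow> real" and a :: "'m \<Rightarrow> real"
  assumes fin: "finite J" and m0: "m0 \<in> J" and c0: "c m0 \<noteq> 0"
    and apos: "\<And>m. m \<in> J \<Longrightarrow> 0 < a m"
    and alt: "\<And>m. m \<in> J \<Longrightarrow> m \<noteq> m0 \<Longrightarrow> a m < a m0"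
  shows "\<exists>s::nat. (\<Sum>m\<in>J. c m * a m ^ s) \<noteq> 0"
proof (rule ccontr)
  assume "\<not> ?thesis"
  then have z: "(\<Sum>m\<in>J. c m * a m ^ s) = 0" for s by blast
  define g where "g s = (\<Sum>m\<in>J. c m * (a m / a m0) ^ s)" for s :: nat
  have a0: "0 < a m0" using apos m0 by blast
  have gz: "g s = 0" for s
  proof -
    have "g s = (\<Sum>m\<in>J. c m * a m ^ s) / a m0 ^ s"
      unfolding g_def by (simp add: sum_divide_distrib power_divide)
    then show ?thesis using z by simp
  qed
  have "g \<longlonglongrightarrow> (\<Sum>m\<in>J. c m * (if m = m0 then 1 else 0))"
    unfolding g_def
  proof (rule tendsto_sum)
    fix m assume m: "m \<in> J"
    show "(\<lambda>s. c m * (a m / a m0) ^ s) \<longlonglongrightarrow> c m * (if m = m0 then 1 else 0)"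
    proof (cases "m = m0")
      case True then show ?thesis using a0 by simp
    next
      case False
      have "\<bar>a m / a m0\<bar> < 1" using apos[OF m] alt[OF m False] a0 by (simp add: abs_if field_simps)
      then have "(\<lambda>s. (a m / a m0) ^ s) \<longlonglongrightarrow> 0" by (simp add: LIMSEQ_abs_realpow_zero2)
      then show ?thesis using False by (simp add: tendsto_mult_right_zero)
    qed
  qed
  moreover have "(\<Sum>m\<in>J. c m * (if m = m0 then 1 else 0)) = c m0"
    using fin m0 by (simp add: if_distrib sum.delta cong: if_cong)
  moreover have "g = (\<lambda>_. 0)" using gz by auto
  then have "g \<longlonglongrightarrow> 0" by simp
  ultimately have "c m0 = 0" using LIMSEQ_unique by metis
  then show False using c0 by simp
qed

lemma poly_nonvanish:
  fixes P :: "('v \<Rightarrow>\<^sub>0 nat) \<Rightarrow>\<^sub>0 real"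
  assumes P: "P \<noteq> 0"
  shows "\<exists>y::'v \<Rightarrow> real. (\<Sum>m\<in>Poly_Mapping.keys P. Poly_Mapping.lookup P m * (\<Prod>v\<in>Poly_Mapping.keys m. y v ^ Poly_Mapping.lookup m v)) \<noteq> 0"
proof -
  define V where "V = \<Union> (Poly_Mapping.keys ` Poly_Mapping.keys P)"
  have finV: "finite V" unfolding V_def by simp
  have "V \<lesssim> {p::nat. prime p}" using finite_lepoll_infinite[OF primes_infinite finV] .
  then obtain pr :: "'v \<Rightarrow> nat" where pr0: "inj_on pr V \<and> pr ` V \<subseteq> {p. prime p}" unfolding lepoll_def by blast
  then have pr: "inj_on pr V" "pr ` V \<subseteq> {p. prime p}" by simp_all
  define M where "M m = (\<Prod>v\<in>Poly_Mapping.keys m. pr v ^ Poly_Mapping.lookup m v)" for m :: "'v \<Rightarrow>\<^sub>0 nat"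
  have keysV: "Poly_Mapping.keys m \<subseteq> V" if "m \<in> Poly_Mapping.keys P" for m
    using that unfolding V_def by blast
  have Mpos: "0 < M m" if "m \<in> Poly_Mapping.keys P" for m
  proof -
    have "\<forall>v\<in>Poly_Mapping.keys m. 0 < pr v ^ Poly_Mapping.lookup m v"
    proof
      fix v assume "v \<in> Poly_Mapping.keys m"
      then have "v \<in> V" using keysV[OF that] by blast
      then have "prime (pr v)" using pr(2) by blast
      then show "0 < pr v ^ Poly_Mapping.lookup m v" using prime_gt_0_nat by simp
    qed
    then show ?thesis unfolding M_def by (simp add: prod_pos)
  qed
  have mult: "multiplicity (pr w) (M m) = Poly_Mapping.lookup m w"
    if m: "m \<in> Poly_Mapping.keys P" and w: "w \<in> V" for m w
  proof -
    have injm: "inj_on pr (Poly_Mapping.keys m)" using pr(1) keysV[OF m] inj_on_subset by blast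
    have "M m = (\<Prod>q\<in>pr ` Poly_Mapping.keys m. q ^ Poly_Mapping.lookup m (inv_into (Poly_Mapping.keys m) pr q))"
      unfolding M_def using injm by (simp add: prod.reindex)
    moreover have "multiplicity (pr w) (\<Prod>q\<in>pr ` Poly_Mapping.keys m. q ^ Poly_Mapping.lookup m (inv_into (Poly_Mapping.keys m) pr q))
        = (if pr w \<in> pr ` Poly_Mapping.keys m then Poly_Mapping.lookup m (inv_into (Poly_Mapping.keys m) pr (pr w)) else 0)"
      by (rule multiplicity_prod_prime_powers) (use pr keysV[OF m] w in auto)
    moreover have "pr w \<in> pr ` Poly_Mapping.keys m \<longleftrightarrow> w \<in> Poly_Mapping.keys m"
      using pr(1) keysV[OF m] w by (auto simp: inj_on_def)
    ultimately show ?thesis using injm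
      by (auto simp: in_keys_iff)
  qed
  have Minj: "m = m'" if "m \<in> Poly_Mapping.keys P" "m' \<in> Poly_Mapping.keys P" "M m = M m'" for m m'
  proof (rule poly_mapping_eqI)
    fix w show "Poly_Mapping.lookup m w = Poly_Mapping.lookup m' w"
    proof (cases "w \<in> V")
      case True then show ?thesis using mult[OF that(1) True] mult[OF that(2) True] that(3) by simp
    next
      case False
      then have "w \<notin> Poly_Mapping.keys m" "w \<notin> Poly_Mapping.keys m'" using keysV[OF that(1)] keysV[OF that(2)] by blast+
      then show ?thesis unfolding in_keys_iff by simp
    qed
  qed
  have ne: "Poly_Mapping.keys P \<noteq> {}" using P by simp
  have "Max (M ` Poly_Mapping.keys P) \<in> M ` Poly_Mapping.keys P" by (rule Max_in) (use ne in simp_all)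
  then obtain m0 where m0a: "m0 \<in> Poly_Mapping.keys P" "M m0 = Max (M ` Poly_Mapping.keys P)" by auto
  have "\<forall>m\<in>Poly_Mapping.keys P. M m \<le> M m0"
    unfolding m0a(2) by (auto intro: Max_ge)
  note m0 = m0a(1) this
  have "\<exists>s::nat. (\<Sum>m\<in>Poly_Mapping.keys P. Poly_Mapping.lookup P m * real (M m) ^ s) \<noteq> 0"
  proof (rule dominant_limit[OF finite_keys m0(1)])
    show "Poly_Mapping.lookup P m0 \<noteq> 0" using m0(1) by (simp add: in_keys_iff)
    show "\<And>m. m \<in> Poly_Mapping.keys P \<Longrightarrow> 0 < real (M m)" using Mpos by simp
    show "\<And>m. m \<in> Poly_Mapping.keys P \<Longrightarrow> m \<noteq> m0 \<Longrightarrow> real (M m) < real (M m0)"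
    proof -
      fix m assume "m \<in> Poly_Mapping.keys P" "m \<noteq> m0"
      then have "M m \<le> M m0" "M m \<noteq> M m0" using m0 Minj by blast+
      then show "real (M m) < real (M m0)" by simp
    qed
  qed
  then obtain s :: nat where s: "(\<Sum>m\<in>Poly_Mapping.keys P. Poly_Mapping.lookup P m * real (M m) ^ s) \<noteq> 0" by blast
  define y where "y v = real (pr v) ^ s" for v
  have "(\<Prod>v\<in>Poly_Mapping.keys m. y v ^ Poly_Mapping.lookup m v) = real (M m) ^ s" for m
  proof -
    have "(\<Prod>v\<in>Poly_Mapping.keys m. y v ^ Poly_Mapping.lookup m v) = (\<Prod>v\<in>Poly_Mapping.keys m. (real (pr v) ^ Poly_Mapping.lookup m v) ^ s)"
      unfolding y_def by (intro prod.cong refl) (simp add: power_mult[symmetric] mult.commute)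
    also have "\<dots> = (\<Prod>v\<in>Poly_Mapping.keys m. real (pr v) ^ Poly_Mapping.lookup m v) ^ s"
      by (rule prod_power_distrib[symmetric])
    also have "\<dots> = real (M m) ^ s" unfolding M_def by simp
    finally show ?thesis .
  qed
  then show ?thesis using s by (intro exI[of _ y]) simp
qed


definition phi :: "real set \<Rightarrow> Z \<Rightarrow> real" where
  "phi S z = (let k = to_nat (map (\<lambda>x. x \<in> S) (fst z)) in if k < length (snd z) then snd z ! k else 0)"

lemma phi_zero: "phi S ([],[]) = 0"
  by (simp add: phi_def)

lemma realize:
  fixes V :: "'v set" and S :: "'v \<Rightarrow> real set" and y :: "'v \<Rightarrow> real"
  assumes finV: "finite V" and injS: "inj_on S V"
  shows "\<exists>z. \<forall>v\<in>V. phi (S v) z = y v"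
proof -
  define wit where "wit v w = (SOME x. (x \<in> S v) \<noteq> (x \<in> S w))" for v w
  define W where "W = (\<lambda>(v,w). wit v w) ` (V \<times> V)"
  have "finite W" unfolding W_def using finV by simp
  then obtain xs where xs: "set xs = W" using finite_list by blast
  define pat where "pat v = map (\<lambda>x. x \<in> S v) xs" for v
  define k where "k v = to_nat (pat v)" for v
  have injk: "inj_on k V"
  proof (rule inj_onI)
    fix v w assume vw: "v \<in> V" "w \<in> V" "k v = k w"
    show "v = w"
    proof (rule ccontr)
      assume ne: "v \<noteq> w"
      then have "S v \<noteq> S w" using injS vw by (auto simp: inj_on_def)
      then have "\<exists>x. (x \<in> S v) \<noteq> (x \<in> S w)" by blast
      then have wv: "(wit v w \<in> S v) \<noteq> (wit v w \<in> S w)" unfolding wit_def by (rule someI_ex)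
      have "wit v w \<in> set xs" using xs vw unfolding W_def by force
      moreover have "pat v = pat w" using vw(3) unfolding k_def by simp
      ultimately show False using wv unfolding pat_def by (auto simp: map_eq_conv)
    qed
  qed
  define L where "L = Suc (Max (insert 0 (k ` V)))"
  define ys where "ys = map (\<lambda>j. if j \<in> k ` V then y (inv_into V k j) else 0) [0..<L]"
  have "phi (S v) (xs, ys) = y v" if v: "v \<in> V" for v
  proof -
    have kl: "k v < L" unfolding L_def using finV v by (simp add: le_imp_less_Suc)
    have "to_nat (map (\<lambda>x. x \<in> S v) xs) = k v" unfolding k_def pat_def by simp
    moreover have "ys ! k v = y v" unfolding ys_def using kl v injk by simp
    ultimately show ?thesis unfolding phi_def using kl by (simp add: ys_def Let_def)
  qed
  then show ?thesis by blast
qed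


definition KK :: "real set set" where
  "KK = {K. closed K \<and> K \<subseteq> {0..1} \<and> 0 < measure lebesgue K}"

lemma I01_KK: "{0..1::real} \<in> KK"
  unfolding KK_def by simp

locale bern =
  fixes r :: "'k rel" and M :: "'k \<Rightarrow> real set" and p :: "real set \<times> Z \<Rightarrow> real"
  assumes Mnull: "\<And>\<alpha>. M \<alpha> \<in> null_sets lebesgue"
    and cover: "{0..1} \<subseteq> (\<Union>\<alpha>. M \<alpha>)"
    and Unull: "\<And>\<alpha>. \<Union> (M ` underS r \<alpha>) \<in> null_sets lebesgue"
    and pinj: "inj_on p (KK \<times> UNIV)"
    and pin: "\<And>K z. K \<in> KK \<Longrightarrow> p (K, z) \<in> K"
begin

definition N where "N \<alpha> = \<Union> (M ` underS r \<alpha>) \<union> M \<alpha>"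
definition A where "A = p ` (KK \<times> UNIV)"
definition zz where "zz t = snd (inv_into (KK \<times> UNIV) p t)"
definition mk :: "(Z \<Rightarrow> real) \<Rightarrow> 'k \<Rightarrow> real \<Rightarrow> real" where
  "mk Q = (\<lambda>\<alpha> t. if t \<in> N \<alpha> \<and> t \<in> A then Q (zz t) else 0)"
definition gen where "gen S = mk (phi S)"

lemma pz: "K \<in> KK \<Longrightarrow> p (K,z) \<in> A \<and> zz (p (K,z)) = z \<and> p (K,z) \<in> K"
  unfolding A_def zz_def using pinj pin by (auto simp: inv_into_f_f)

lemma A01: "A \<subseteq> {0..1}"
proof
  fix t assume "t \<in> A"
  then obtain K z where K: "K \<in> KK" "t = p (K,z)" unfolding A_def by blast
  then have "t \<in> K" using pin by simp
  then show "t \<in> {0..1}" using K(1) unfolding KK_def by blast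
qed

lemma Nnull: "N \<alpha> \<in> null_sets lebesgue"
  unfolding N_def using Unull Mnull by (rule null_sets.Un)

lemma event: "t \<in> A \<Longrightarrow> \<exists>\<beta>. t \<in> N \<beta> \<and> (\<forall>\<alpha>. (\<beta>,\<alpha>) \<in> r \<and> \<alpha> \<noteq> \<beta> \<longrightarrow> t \<in> N \<alpha>)"
proof -
  assume "t \<in> A"
  then obtain \<beta> where b: "t \<in> M \<beta>" using A01 cover by blast
  have "t \<in> N \<alpha>" if "(\<beta>,\<alpha>) \<in> r" "\<alpha> \<noteq> \<beta>" for \<alpha>
  proof -
    have "\<beta> \<in> underS r \<alpha>" using that by (auto simp: underS_def)
    then show ?thesis using b unfolding N_def by blast
  qed
  moreover have "t \<in> N \<beta>" using b unfolding N_def by blast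
  ultimately show ?thesis by blast
qed

lemma zwit: "\<exists>\<alpha> t. t \<in> N \<alpha> \<and> t \<in> A \<and> zz t = z"
proof -
  have t: "p ({0..1},z) \<in> A" "zz (p ({0..1},z)) = z" using pz[OF I01_KK] by auto
  then show ?thesis using event[OF t(1)] by blast
qed

lemma gen_inj: "inj gen"
proof (rule injI)
  fix S S' assume eq: "gen S = gen S'"
  show "S = S'"
  proof (rule ccontr)
    assume ne: "S \<noteq> S'"
    obtain z where z: "\<forall>v\<in>{S,S'}. phi (id v) z = (if v = S then 1 else 0)"
      using realize[of "{S,S'}" id "\<lambda>v. if v = S then 1 else 0"] by auto
    obtain \<alpha> t where t: "t \<in> N \<alpha>" "t \<in> A" "zz t = z" using zwit by blast
    have "gen S \<alpha> t = 1" "gen S' \<alpha> t = 0" using z t ne by (auto simp: gen_def mk_def)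
    then show False using eq by simp
  qed
qed

lemma card_X: "(card_of (range gen), card_of (Pow (UNIV :: real set))) \<in> ordIso"
proof -
  have "bij_betw gen UNIV (range gen)" using gen_inj by (simp add: bij_betw_def)
  then have "(card_of (UNIV :: real set set), card_of (range gen)) \<in> ordIso"
    using card_of_ordIso by blast
  then show ?thesis using ordIso_symmetric by simp
qed

lemma mk_val: "t \<in> N \<alpha> \<Longrightarrow> t \<in> A \<Longrightarrow> mk Q \<alpha> t = Q (zz t)"
  by (simp add: mk_def)

lemma indep: "alg_independent (range gen)"
  unfolding alg_independent_def
proof (intro allI impI)
  fix P :: "('k \<Rightarrow> real \<Rightarrow> real) mpoly_rep"
  assume asm: "P \<noteq> 0 \<and> poly_vars P \<subseteq> range gen \<and> Poly_Mapping.lookup P 0 = 0"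
  define V where "V = poly_vars P"
  have finV: "finite V" unfolding V_def poly_vars_def by simp
  define Sof where "Sof v = inv gen v" for v
  have gS: "gen (Sof v) = v" if "v \<in> V" for v
    using that asm unfolding V_def Sof_def by (auto simp: f_inv_into_f)
  have injS: "inj_on Sof V" by (rule inj_on_inverseI[of _ gen]) (use gS in auto)
  obtain y where y: "(\<Sum>m\<in>Poly_Mapping.keys P. Poly_Mapping.lookup P m * (\<Prod>v\<in>Poly_Mapping.keys m. y v ^ Poly_Mapping.lookup m v)) \<noteq> 0"
    using poly_nonvanish asm by blast
  obtain z where z: "\<forall>v\<in>V. phi (Sof v) z = y v" using realize[OF finV injS] by blast
  obtain \<alpha> t where t: "t \<in> N \<alpha>" "t \<in> A" "zz t = z" using zwit by blast
  have vv: "v \<alpha> t = y v" if "v \<in> V" for v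
  proof -
    have "v \<alpha> t = gen (Sof v) \<alpha> t" using gS[OF that] by simp
    also have "\<dots> = y v" using t z that by (simp add: gen_def mk_val)
    finally show ?thesis .
  qed
  have "poly_eval P \<alpha> t = (\<Sum>m\<in>Poly_Mapping.keys P. Poly_Mapping.lookup P m * (\<Prod>v\<in>Poly_Mapping.keys m. y v ^ Poly_Mapping.lookup m v))"
    unfolding poly_eval_def
  proof (intro sum.cong refl arg_cong2[where f="(*)"] prod.cong)
    fix m v assume "m \<in> Poly_Mapping.keys P" "v \<in> Poly_Mapping.keys m"
    then have "v \<in> V" unfolding V_def poly_vars_def by blast
    then show "v \<alpha> t ^ Poly_Mapping.lookup m v = y v ^ Poly_Mapping.lookup m v" using vv by simp
  qed
  then show "poly_eval P \<noteq> (\<lambda>\<alpha> t. 0)" using y by (metis)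
qed

lemma gen_form: "f \<in> gen_alg (range gen) \<Longrightarrow> \<exists>Q. Q ([],[]) = 0 \<and> f = mk Q"
proof (induction rule: gen_alg.induct)
  case (gen x)
  then obtain S where "x = gen S" by blast
  then show ?case by (intro exI[of _ "phi S"]) (simp add: gen_def phi_zero)
next
  case (add f g)
  then obtain Q1 Q2 where "Q1 ([],[]) = 0" "f = mk Q1" "Q2 ([],[]) = 0" "g = mk Q2" by blast
  then show ?case by (intro exI[of _ "\<lambda>z. Q1 z + Q2 z"]) (auto simp: mk_def fun_eq_iff)
next
  case (mult f g)
  then obtain Q1 Q2 where "Q1 ([],[]) = 0" "f = mk Q1" "Q2 ([],[]) = 0" "g = mk Q2" by blast
  then show ?case by (intro exI[of _ "\<lambda>z. Q1 z * Q2 z"]) (auto simp: mk_def fun_eq_iff)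
next
  case (scale f c)
  then obtain Q1 where "Q1 ([],[]) = 0" "f = mk Q1" by blast
  then show ?case by (intro exI[of _ "\<lambda>z. c * Q1 z"]) (auto simp: mk_def fun_eq_iff)
qed

lemma in_AN:
  assumes Q0: "Q ([],[]) = 0" and nz: "mk Q \<noteq> (\<lambda>\<alpha> t. 0)"
  shows "mk Q \<in> AN r"
proof -
  have meas: "mk Q \<alpha> \<in> borel_measurable lebesgue" for \<alpha>
  proof (rule borel_measurable_AE[of "\<lambda>t. 0"])
    show "(\<lambda>t. 0::real) \<in> borel_measurable lebesgue" by simp
    show "AE t in lebesgue. 0 = mk Q \<alpha> t"
      by (rule AE_I'[OF Nnull[of \<alpha>]]) (auto simp: mk_def)
  qed
  define g where "g t = (if t \<in> A then Q (zz t) else 0)" for t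
  have conv: "kseq_converges r (\<lambda>\<alpha>. mk Q \<alpha> t) (g t)" for t
    unfolding kseq_converges_def
  proof (intro allI impI)
    fix U :: "real set" assume U: "open U \<and> g t \<in> U"
    show "\<exists>\<alpha>0. \<forall>\<alpha>. (\<alpha>0, \<alpha>) \<in> r \<and> \<alpha> \<noteq> \<alpha>0 \<longrightarrow> mk Q \<alpha> t \<in> U"
    proof (cases "t \<in> A")
      case True
      then obtain \<beta> where b: "\<forall>\<alpha>. (\<beta>,\<alpha>) \<in> r \<and> \<alpha> \<noteq> \<beta> \<longrightarrow> t \<in> N \<alpha>" using event by blast
      show ?thesis
        by (rule exI[of _ \<beta>]) (use b U True in \<open>auto simp: mk_def g_def\<close>)
    next
      case False
      then show ?thesis using U by (auto simp: mk_def g_def)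
    qed
  qed
  obtain \<alpha> t where at: "mk Q \<alpha> t \<noteq> 0" using nz by (metis ext)
  then have tA: "t \<in> A" and Qz: "Q (zz t) \<noteq> 0" by (auto simp: mk_def split: if_splits)
  define D where "D = {t. g t \<noteq> 0}"
  have D_eq: "D = {t\<in>A. Q (zz t) \<noteq> 0}" unfolding D_def g_def by auto
  have Dnm: "D \<notin> sets lebesgue"
  proof (rule nonmeas)
    show "D \<subseteq> {0..1}" using A01 D_eq by auto
    fix K :: "real set" assume K: "closed K" "K \<subseteq> {0..1}" "0 < measure lebesgue K"
    then have KK: "K \<in> KK" unfolding KK_def by simp
    have "p (K, zz t) \<in> K \<inter> D" using pz[OF KK, of "zz t"] Qz D_eq by auto
    moreover have "p (K, ([],[])) \<in> K - D" using pz[OF KK, of "([],[])"] Q0 D_eq by auto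
    ultimately show "K \<inter> D \<noteq> {} \<and> K - D \<noteq> {}" by blast
  qed
  have gnm: "g \<notin> borel_measurable lebesgue"
  proof
    assume gm: "g \<in> borel_measurable lebesgue"
    have "g -` (-{0}) \<inter> space lebesgue \<in> sets lebesgue"
      by (rule measurable_sets[OF gm]) simp
    moreover have "g -` (-{0}) \<inter> space lebesgue = D" unfolding D_def by auto
    ultimately show False using Dnm by simp
  qed
  show ?thesis unfolding AN_def
    using meas gnm conv by blast
qed

lemma result: "strongly_algebrable (AN r) (card_of (Pow (UNIV :: real set)))"
  unfolding strongly_algebrable_def
proof (intro exI[of _ "range gen"] conjI ballI impI)
  show "(card_of (range gen), card_of (Pow (UNIV :: real set))) \<in> ordIso" by (rule card_X)
  show "alg_independent (range gen)" by (rule indep)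
  fix f assume f: "f \<in> gen_alg (range gen)" "f \<noteq> (\<lambda>\<alpha> t. 0)"
  then obtain Q where "Q ([],[]) = 0" "f = mk Q" using gen_form by blast
  then show "f \<in> AN r" using in_AN f(2) by blast
qed

end


theorem mainTheorem18:
  fixes r :: "'k rel"
  assumes "is_addN r" and "is_covN r"
  shows "strongly_algebrable (AN r) (card_of (Pow (UNIV :: real set)))"
proof -
  include cardinal_syntax
  have co: "card_order r" and addmin: "\<And>F::real set set. F \<subseteq> null_sets lebesgue \<Longrightarrow> \<Union>F \<notin> null_sets lebesgue \<Longrightarrow> r \<le>o |F|"
    using assms(1) unfolding is_addN_def by blast+
  obtain Fc :: "real set set" where Fc: "Fc \<subseteq> null_sets lebesgue" "{0..1} \<subseteq> \<Union>Fc" "|Fc| =o r"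
    using assms(2) unfolding is_covN_def by blast
  have Co: "Card_order r" and Fr: "Field r = UNIV" using card_order_on_Card_order[OF co] by auto
  have "|UNIV::'k set| =o r" using card_of_Field_ordIso[OF Co] Fr by simp
  then have "|UNIV::'k set| =o |Fc|" using Fc(3) ordIso_symmetric ordIso_transitive by blast
  then obtain M where M: "bij_betw M (UNIV::'k set) Fc" using card_of_ordIso by blast
  have MF: "M ` UNIV = Fc" using M by (simp add: bij_betw_def)
  have Mnull: "M \<alpha> \<in> null_sets lebesgue" for \<alpha> using MF Fc(1) by blast
  have cover: "{0..1} \<subseteq> (\<Union>\<alpha>. M \<alpha>)" using MF Fc(2) by simp
  have Unull: "\<Union> (M ` underS r \<alpha>) \<in> null_sets lebesgue" for \<alpha>
  proof (rule ccontr)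
    assume nn: "\<Union> (M ` underS r \<alpha>) \<notin> null_sets lebesgue"
    have "M ` underS r \<alpha> \<subseteq> null_sets lebesgue" using Mnull by blast
    then have "r \<le>o |M ` underS r \<alpha>|" using addmin nn by blast
    moreover have "|M ` underS r \<alpha>| \<le>o |underS r \<alpha>|" by (rule card_of_image)
    moreover have "|underS r \<alpha>| <o r" using card_of_underS[OF Co] Fr by simp
    ultimately show False
      by (meson not_ordLess_ordLeq ordLeq_transitive)
  qed
  have inf: "\<not> finite (UNIV::real set)" by (simp add: infinite_UNIV_char_0)
  have "|KK| \<le>o |UNIV::real set|"
    using card_of_mono1[of KK "{K. closed K}"] card_closed ordLeq_transitive unfolding KK_def by blast
  then have "|KK \<times> (UNIV::Z set)| \<le>o |(UNIV::real set) \<times> (UNIV::Z set)|" by (rule card_of_Times_mono1)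
  moreover have "|(UNIV::real set) \<times> (UNIV::Z set)| \<le>o |(UNIV::real set) \<times> (UNIV::real set)|"
    by (rule card_of_Times_mono2[OF card_Z])
  moreover have "|(UNIV::real set) \<times> (UNIV::real set)| =o |UNIV::real set|"
    by (rule card_of_Times_same_infinite[OF inf])
  ultimately have IB: "|KK \<times> (UNIV::Z set)| \<le>o |UNIV::real set|"
    by (meson ordLeq_transitive ordIso_imp_ordLeq)
  have CB: "\<forall>i\<in>KK \<times> (UNIV::Z set). |UNIV::real set| \<le>o |fst i|"
    using card_pos_closed unfolding KK_def by auto
  obtain p :: "real set \<times> Z \<Rightarrow> real" where p: "inj_on p (KK \<times> UNIV)" "\<forall>i\<in>KK \<times> UNIV. p i \<in> fst i"
    using inj_choice[OF IB CB] by blast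
  interpret bern r M p
    by unfold_locales (use Mnull cover Unull p in auto)
  show ?thesis by (rule result)
qed


end
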